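(* Let $X$ be a compact metric space, $T:X\to X$ a surjective continuous map which is not one-to-one, and $f\in C(X,\mathbb{R})$. Then for each finite open cover $\mathcal{U}$ of $X$, each compact $K\subseteq X$ and all $n,m\in\mathbb{N}$, $$P_n(T,f\circ T^m,T^{-m}\mathcal{U},T^{-m}K)=P_n(T,f,\mathcal{U},K).$$
   Context: For $g\in C(X,\mathbb{R})$, $g_n=\sum_{i=0}^{n-1}g\circ T^i$. $\mathcal{C}_X$ = finite Borel covers of $X$; $\mathcal{V}\succeq\mathcal{W}$ means each element of $\mathcal{V}$ lies in some element of $\mathcal{W}$; $\mathcal{W}_0^{n-1}=\bigvee_{i=0}^{n-1}T^{-i}\mathcal{W}$; $T^{-m}\mathcal{U}=\{T^{-m}U:U\in\mathcal{U}\}$ and $T^{-m}K$ denotes the preimage. $P_n(T,g,\mathcal{W},L)=\inf\{\sum_{V\in\mathcal{V}}\sup_{x\in V\cap L}\exp g_n(x):\mathcal{V}\in\mathcal{C}_X,\ \mathcal{V}\succeq\mathcal{W}_0^{n-1}\}$, terms with $V\cap L=\emptyset$ contributing $0$. *)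

theory Defs
  imports "HOL-Analysis.Analysis"
begin

definition birkhoff_sum :: "('a \<Rightarrow> 'a) \<Rightarrow> ('a \<Rightarrow> real) \<Rightarrow> nat \<Rightarrow> 'a \<Rightarrow> real" where
  "birkhoff_sum T g n x = (\<Sum>i<n. g ((T ^^ i) x))"

definition borel_covers :: "('a::topological_space) set set set" where
  "borel_covers = {\<V>. finite \<V> \<and> \<V> \<subseteq> sets borel \<and> \<Union>\<V> = UNIV}"

definition refines :: "'a set set \<Rightarrow> 'a set set \<Rightarrow> bool" where
  "refines \<V> \<W> \<longleftrightarrow> (\<forall>V\<in>\<V>. \<exists>W\<in>\<W>. V \<subseteq> W)"

definition join_cover :: "('a \<Rightarrow> 'a) \<Rightarrow> 'a set set \<Rightarrow> nat \<Rightarrow> 'a set set" where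
  "join_cover T \<W> n = {(\<Inter>i<n. (T ^^ i) -` (w i)) | w. \<forall>i<n. w i \<in> \<W>}"

definition preimage_cover :: "('a \<Rightarrow> 'a) \<Rightarrow> nat \<Rightarrow> 'a set set \<Rightarrow> 'a set set" where
  "preimage_cover T m \<U> = (\<lambda>U. (T ^^ m) -` U) ` \<U>"

definition P_n :: "nat \<Rightarrow> ('a::topological_space \<Rightarrow> 'a) \<Rightarrow> ('a \<Rightarrow> real) \<Rightarrow> 'a set set \<Rightarrow> 'a set \<Rightarrow> real" where
  "P_n n T g \<W> L = Inf {(\<Sum>V\<in>\<V>. if V \<inter> L = {} then 0
                                    else (SUP x\<in>V \<inter> L. exp (birkhoff_sum T g n x)))
                        | \<V>. \<V> \<in> borel_covers \<and> refines \<V> (join_cover T \<W> n)}"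

end

theory Submission
  imports Defs
begin

definition tm :: "('a \<Rightarrow> real) \<Rightarrow> 'a set \<Rightarrow> 'a set \<Rightarrow> real" where
  "tm g L V = (if V \<inter> L = {} then 0 else (SUP x\<in>V \<inter> L. exp (g x)))"

lemma P_n_alt: "P_n n T g W L = Inf {sum (tm (birkhoff_sum T g n) L) V | V. V \<in> borel_covers \<and> refines V (join_cover T W n)}"
  unfolding P_n_def tm_def by simp

lemma cont_funpow:
  fixes T :: "'a::topological_space \<Rightarrow> 'a"
  assumes "continuous_on UNIV T" shows "continuous_on UNIV (T ^^ i)"
proof (induction i)
  case 0 have "T ^^ 0 = id" by auto then show ?case by (simp add: continuous_on_id)
next
  case (Suc i)
  have "continuous_on UNIV (T \<circ> (T ^^ i))"
    by (rule continuous_on_compose) (use Suc assms in \<open>auto intro: continuous_on_subset\<close>)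
  then show ?case by (simp add: funpow_Suc_right comp_def funpow_swap1)
qed

lemma join_open:
  fixes T :: "'a::topological_space \<Rightarrow> 'a"
  assumes "continuous_on UNIV T" "\<forall>U\<in>\<U>. open U" "J \<in> join_cover T \<U> n"
  shows "open J"
proof -
  obtain w where J: "J = (\<Inter>i<n. (T ^^ i) -` (w i))" and w: "\<forall>i<n. w i \<in> \<U>"
    using assms(3) unfolding join_cover_def by blast
  have "open ((T ^^ i) -` (w i))" if "i < n" for i
    using open_vimage[of "w i" "T ^^ i"] cont_funpow[OF assms(1)] assms(2) w that by auto
  then show ?thesis unfolding J by (intro open_INT) auto
qed

lemma join_cover_borel:
  fixes T :: "'a::topological_space \<Rightarrow> 'a"
  assumes "continuous_on UNIV T" "finite \<U>" "\<forall>U\<in>\<U>. open U" "\<Union>\<U> = UNIV"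
  shows "join_cover T \<U> n \<in> borel_covers"
proof -
  have sub: "join_cover T \<U> n \<subseteq> (\<lambda>w. \<Inter>i<n. (T ^^ i) -` (w i)) ` (PiE {..<n} (\<lambda>_. \<U>))"
  proof
    fix J assume "J \<in> join_cover T \<U> n"
    then obtain w where J: "J = (\<Inter>i<n. (T ^^ i) -` (w i))" and w: "\<forall>i<n. w i \<in> \<U>"
      unfolding join_cover_def by blast
    have "restrict w {..<n} \<in> PiE {..<n} (\<lambda>_. \<U>)" using w by auto
    moreover have "J = (\<Inter>i<n. (T ^^ i) -` (restrict w {..<n} i))" using J by auto
    ultimately show "J \<in> (\<lambda>w. \<Inter>i<n. (T ^^ i) -` (w i)) ` (PiE {..<n} (\<lambda>_. \<U>))" by blast
  qed
  have fin: "finite (join_cover T \<U> n)"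
    by (rule finite_subset[OF sub]) (use assms(2) in \<open>auto intro: finite_PiE\<close>)
  have bor: "join_cover T \<U> n \<subseteq> sets borel"
    using join_open[OF assms(1) assms(3)] borel_open by blast
  have "x \<in> \<Union>(join_cover T \<U> n)" for x
  proof -
    define w where "w i = (SOME u. u \<in> \<U> \<and> (T ^^ i) x \<in> u)" for i
    have "w i \<in> \<U> \<and> (T ^^ i) x \<in> w i" for i
      unfolding w_def by (rule someI_ex) (use assms(4) in auto)
    then have "(\<Inter>i<n. (T ^^ i) -` (w i)) \<in> join_cover T \<U> n" "x \<in> (\<Inter>i<n. (T ^^ i) -` (w i))"
      unfolding join_cover_def by auto
    then show ?thesis by blast
  qed
  then show ?thesis using fin bor unfolding borel_covers_def by auto
qed

theorem lemma5p2:
  fixes T :: "'a::metric_space \<Rightarrow> 'a" and f :: "'a \<Rightarrow> real"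
    and \<U> :: "'a set set" and K :: "'a set" and n m :: nat
  assumes "compact (UNIV :: 'a set)"
    and "continuous_on UNIV T" and "surj T" and "\<not> inj T"
    and "continuous_on UNIV f"
    and "finite \<U>" and "\<forall>U\<in>\<U>. open U" and "\<Union>\<U> = UNIV"
    and "compact K"
  shows "P_n n T (f \<circ> (T ^^ m)) (preimage_cover T m \<U>) ((T ^^ m) -` K) = P_n n T f \<U> K"
proof -
  define S where "S = T ^^ m"
  define g where "g = birkhoff_sum T f n"
  have surjS: "surj S" unfolding S_def using assms(3) by (rule surj_fn)
  have contS: "continuous_on UNIV S" unfolding S_def using cont_funpow[OF assms(2)] .
  have comm: "(T ^^ i) (S x) = S ((T ^^ i) x)" for i x
    unfolding S_def by (metis funpow_add add.commute comp_apply)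
  have bs: "birkhoff_sum T (f \<circ> S) n = (\<lambda>x. g (S x))"
    by (auto simp: birkhoff_sum_def g_def comm)
  have contg: "continuous_on UNIV g"
    unfolding g_def birkhoff_sum_def[abs_def]
    apply (intro continuous_on_sum)
    apply (rule continuous_on_compose2[OF assms(5) cont_funpow[OF assms(2)]])
    by auto
  have contexp: "continuous_on UNIV (\<lambda>x. exp (g x))"
    by (intro continuous_intros contg)
  have "compact ((\<lambda>x. exp (g x)) ` K)"
    by (rule compact_continuous_image[OF continuous_on_subset[OF contexp] assms(9)]) auto
  then have bddK: "bdd_above ((\<lambda>x. exp (g x)) ` K)"
    by (intro bounded_imp_bdd_above compact_imp_bounded)
  have bdd: "bdd_above ((\<lambda>x. exp (g x)) ` (A \<inter> K))" for A
    by (rule bdd_above_mono[OF bddK]) auto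
  have tm_nonneg: "0 \<le> tm g K A" for A
  proof (cases "A \<inter> K = {}")
    case False
    then obtain y where "y \<in> A \<inter> K" by auto
    then have "exp (g y) \<le> (SUP x\<in>A \<inter> K. exp (g x))" by (rule cSUP_upper[OF _ bdd])
    then show ?thesis using False unfolding tm_def by (smt (verit) exp_gt_zero)
  qed (simp add: tm_def)
  have tmL: "tm (\<lambda>x. g (S x)) (S -` K) A = tm g K (S ` A)" for A
  proof -
    have e: "A \<inter> S -` K = {} \<longleftrightarrow> S ` A \<inter> K = {}" by auto
    have "(\<lambda>x. exp (g (S x))) ` (A \<inter> S -` K) = (\<lambda>y. exp (g y)) ` (S ` A \<inter> K)" by auto
    then show ?thesis unfolding tm_def using e by simp
  qed
  define LS where "LS = {sum (tm (\<lambda>x. g (S x)) (S -` K)) V | V. V \<in> borel_covers \<and> refines V (join_cover T (preimage_cover T m \<U>) n)}"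
  define RS where "RS = {sum (tm g K) V | V. V \<in> borel_covers \<and> refines V (join_cover T \<U> n)}"
  have L: "P_n n T (f \<circ> (T ^^ m)) (preimage_cover T m \<U>) ((T ^^ m) -` K) = Inf LS"
    unfolding P_n_alt LS_def bs[unfolded S_def] g_def S_def ..
  have R: "P_n n T f \<U> K = Inf RS"
    unfolding P_n_alt RS_def g_def ..
  have dir1: "\<exists>a\<in>LS. a \<le> b" if bR: "b \<in> RS" for b
  proof -
    obtain V where b: "b = sum (tm g K) V" and V: "V \<in> borel_covers" "refines V (join_cover T \<U> n)"
      using bR unfolding RS_def by blast
    define V' where "V' = (\<lambda>W. S -` W) ` V"
    have inj: "inj_on (\<lambda>W. S -` W) V"
      by (rule inj_onI) (metis surjS surj_image_vimage_eq)
    have "sum (tm (\<lambda>x. g (S x)) (S -` K)) V' = sum (\<lambda>W. tm g K (S ` (S -` W))) V"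
      unfolding V'_def by (simp add: sum.reindex[OF inj] tmL)
    also have "\<dots> = b" unfolding b using surjS by (simp add: surj_image_vimage_eq[OF surjS])
    finally have eq: "sum (tm (\<lambda>x. g (S x)) (S -` K)) V' = b" .
    have meas: "S \<in> borel_measurable borel" by (rule borel_measurable_continuous_onI[OF contS])
    have "V' \<in> borel_covers"
      using V(1) unfolding borel_covers_def V'_def
      apply (auto intro: measurable_sets_borel[OF meas])
      by (metis UNIV_I Union_iff)
    moreover have "refines V' (join_cover T (preimage_cover T m \<U>) n)"
      unfolding refines_def
    proof
      fix V0 assume "V0 \<in> V'"
      then obtain W where W: "W \<in> V" "V0 = S -` W" unfolding V'_def by blast
      then obtain J where J: "J \<in> join_cover T \<U> n" "W \<subseteq> J" using V(2) unfolding refines_def by blast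
      then obtain w where Jw: "J = (\<Inter>i<n. (T ^^ i) -` (w i))" and w: "\<forall>i<n. w i \<in> \<U>"
        unfolding join_cover_def by blast
      have "(\<Inter>i<n. (T ^^ i) -` (S -` w i)) \<in> join_cover T (preimage_cover T m \<U>) n"
        unfolding join_cover_def
        by (rule CollectI, rule exI[of _ "\<lambda>i. S -` w i"]) (auto simp: preimage_cover_def S_def w)
      moreover have "V0 \<subseteq> (\<Inter>i<n. (T ^^ i) -` (S -` w i))"
        using W J Jw by (auto simp: comm[symmetric])
      ultimately show "\<exists>W\<in>join_cover T (preimage_cover T m \<U>) n. V0 \<subseteq> W" by blast
    qed
    ultimately show ?thesis using eq unfolding LS_def by blast
  qed
  have dir2: "\<exists>b\<in>RS. b \<le> a" if aL: "a \<in> LS" for a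
  proof -
    obtain V where a: "a = sum (tm (\<lambda>x. g (S x)) (S -` K)) V" and V: "V \<in> borel_covers"
      "refines V (join_cover T (preimage_cover T m \<U>) n)"
      using aL unfolding LS_def by blast
    have ex: "\<exists>J. J \<in> join_cover T \<U> n \<and> S ` V0 \<subseteq> J" if V0V: "V0 \<in> V" for V0
    proof -
      obtain W where W: "W \<in> join_cover T (preimage_cover T m \<U>) n" "V0 \<subseteq> W"
        using V(2) V0V unfolding refines_def by blast
      then obtain w where Ww: "W = (\<Inter>i<n. (T ^^ i) -` (w i))" and w: "\<forall>i<n. w i \<in> preimage_cover T m \<U>"
        unfolding join_cover_def by blast
      have ex1: "\<exists>u. u \<in> \<U> \<and> w i = S -` u" if "i < n" for i
        using w that unfolding preimage_cover_def S_def by (auto simp: image_iff)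
      have "\<forall>i. \<exists>u. i < n \<longrightarrow> u \<in> \<U> \<and> w i = S -` u" using ex1 by blast
      from choice[OF this] obtain u where u: "\<forall>i<n. u i \<in> \<U> \<and> w i = S -` u i" by blast
      have "(\<Inter>i<n. (T ^^ i) -` (u i)) \<in> join_cover T \<U> n"
        unfolding join_cover_def using u by blast
      moreover have "S ` V0 \<subseteq> (\<Inter>i<n. (T ^^ i) -` (u i))"
        using W Ww u by (auto simp: comm)
      ultimately show ?thesis by blast
    qed
    have "\<forall>V0\<in>V. \<exists>J. J \<in> join_cover T \<U> n \<and> S ` V0 \<subseteq> J" using ex by blast
    from bchoice[OF this] obtain J where J: "\<And>V0. V0 \<in> V \<Longrightarrow> J V0 \<in> join_cover T \<U> n \<and> S ` V0 \<subseteq> J V0" by blast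
    define c where "c V0 = (SUP y\<in>S ` V0 \<inter> K. exp (g y))" for V0
    define B where "B V0 = J V0 \<inter> (- K \<union> (if S ` V0 \<inter> K = {} then {} else {y. exp (g y) \<le> c V0}))" for V0
    have finV: "finite V" using V(1) unfolding borel_covers_def by auto
    have clK: "closed K" using assms(9) by (rule compact_imp_closed)
    have clc: "closed {y. exp (g y) \<le> c V0}" for V0
      by (rule closed_Collect_le[OF contexp continuous_on_const])
    have Bbor: "B V0 \<in> sets borel" if "V0 \<in> V" for V0
    proof -
      have "J V0 \<in> sets borel" using J[OF that] join_open[OF assms(2) assms(7)] borel_open by blast
      moreover have "- K \<in> sets borel" using clK by (intro borel_open) auto
      moreover have "{y. exp (g y) \<le> c V0} \<in> sets borel" using clc by (rule borel_closed)
      ultimately show ?thesis unfolding B_def by auto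
    qed
    have cover: "\<Union>(B ` V) = UNIV"
    proof (intro set_eqI iffI)
      fix y :: 'a
      obtain x where x: "y = S x" using surjS by (metis surjD)
      have "x \<in> \<Union>V" using V(1) unfolding borel_covers_def by simp
      then obtain V0 where V0: "V0 \<in> V" "x \<in> V0" by blast
      have yJ: "y \<in> J V0" using J[OF V0(1)] V0 x by auto
      have "y \<in> B V0"
      proof (cases "y \<in> K")
        case True
        then have ne: "S ` V0 \<inter> K \<noteq> {}" using V0 x by auto
        have "exp (g y) \<le> c V0" unfolding c_def
          by (rule cSUP_upper[OF _ bdd]) (use True V0 x in auto)
        then show ?thesis using yJ ne unfolding B_def by auto
      qed (use yJ in \<open>auto simp: B_def\<close>)
      then show "y \<in> \<Union>(B ` V)" using V0 by blast
    qed auto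
    have BV: "B ` V \<in> borel_covers" using finV Bbor cover unfolding borel_covers_def by auto
    have Bref: "refines (B ` V) (join_cover T \<U> n)"
      unfolding refines_def using J unfolding B_def by blast
    have le: "tm g K (B V0) \<le> tm (\<lambda>x. g (S x)) (S -` K) V0" if "V0 \<in> V" for V0
    proof (cases "S ` V0 \<inter> K = {}")
      case True
      then have "B V0 \<inter> K = {}" unfolding B_def by auto
      then show ?thesis unfolding tmL using True by (simp add: tm_def)
    next
      case False
      have tv: "tm (\<lambda>x. g (S x)) (S -` K) V0 = c V0" unfolding tmL using False by (simp add: tm_def c_def)
      show ?thesis
      proof (cases "B V0 \<inter> K = {}")
        case True
        then have "tm g K (B V0) = 0" by (simp add: tm_def)
        then show ?thesis unfolding tmL using tm_nonneg[of "S ` V0"] by simp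
      next
        case F2: False
        have "(SUP x\<in>B V0 \<inter> K. exp (g x)) \<le> c V0"
          by (rule cSUP_least[OF F2]) (use False in \<open>auto simp: B_def\<close>)
        then show ?thesis using F2 tv by (simp add: tm_def)
      qed
    qed
    have "sum (tm g K) (B ` V) \<le> sum (tm g K \<circ> B) V"
      by (rule sum_image_le[OF finV]) (simp add: tm_nonneg)
    also have "\<dots> \<le> a" unfolding a by (rule sum_mono) (use le in auto)
    finally have "sum (tm g K) (B ` V) \<le> a" .
    then show ?thesis using BV Bref unfolding RS_def by blast
  qed
  have RSne: "RS \<noteq> {}"
    using join_cover_borel[OF assms(2) assms(6) assms(7) assms(8), of n]
    unfolding RS_def refines_def by blast
  have LSne: "LS \<noteq> {}" using RSne dir1 by blast
  have bLS: "bdd_below LS" unfolding LS_def bdd_below_def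
    by (rule exI[of _ 0]) (auto intro!: sum_nonneg simp: tmL tm_nonneg)
  have bRS: "bdd_below RS" unfolding RS_def bdd_below_def
    by (rule exI[of _ 0]) (auto intro!: sum_nonneg simp: tm_nonneg)
  have "Inf LS \<le> Inf RS" by (rule cInf_mono[OF RSne bLS dir1])
  moreover have "Inf RS \<le> Inf LS" by (rule cInf_mono[OF LSne bRS dir2])
  ultimately show ?thesis unfolding L R by simp
qed

end
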